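(* Let $G$ be an interval graph and $D_s\neq D_t$ dominating multisets of $G$ with $|D_s|=|D_t|$. Then there exists a minimum-cost matching $M'$ between $D_s$ and $D_t$ such that at least one of the following holds: (i) there are $(u,v)\in M'$ and $u'\in\mathrm{succ}(u,v)$ such that $\mathrm{slide}(D_s,u,u')$ is dominating; (ii) there are $(u,v)\in M'$ and $v'\in\mathrm{succ}(v,u)$ such that $\mathrm{slide}(D_t,v,v')$ is dominating.
   Context: A multiset $H$ of vertices is a function $H:V\to\mathbb{N}\cup\{0\}$; it is dominating if its support $\{v:H(v)\ge1\}$ is a dominating set. $\mathrm{slide}(D,u,w)=(D\setminus\{u\})\cup\{w\}$. $\mathrm{succ}(u,w)$ is the set of vertices following $u$ on some shortest path from $u$ to $w$, with $\mathrm{succ}(u,u)=\emptyset$. A matching between equal-size multisets $D_s,D_t$ is a multiset $M$ on $V\times V$ with exactly $D_s(v)$ pairs $(v,\cdot)$ and $D_t(v)$ pairs $(\cdot,v)$ for each $v$; cost $c(M)=\sum_{(x,y)}d_G(x,y)M(x,y)$; a minimum-cost matching minimizes this cost. (The graph is assumed connected so that costs are finite.) *)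

theory Defs
  imports Complex_Main "HOL-Library.Multiset"
begin

definition simple_graph :: "'a set \<Rightarrow> ('a \<Rightarrow> 'a \<Rightarrow> bool) \<Rightarrow> bool" where
  "simple_graph V E \<longleftrightarrow> finite V \<and> (\<forall>u v. E u v \<longrightarrow> u \<in> V \<and> v \<in> V)
     \<and> (\<forall>u v. E u v \<longrightarrow> E v u) \<and> (\<forall>v. \<not> E v v)"

definition interval_graph :: "'a set \<Rightarrow> ('a \<Rightarrow> 'a \<Rightarrow> bool) \<Rightarrow> bool" where
  "interval_graph V E \<longleftrightarrow> simple_graph V E \<and>
     (\<exists>l r :: 'a \<Rightarrow> real. (\<forall>v\<in>V. l v \<le> r v) \<and>
        (\<forall>u\<in>V. \<forall>v\<in>V. u \<noteq> v \<longrightarrow> (E u v \<longleftrightarrow> max (l u) (l v) \<le> min (r u) (r v))))"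

definition walk :: "'a set \<Rightarrow> ('a \<Rightarrow> 'a \<Rightarrow> bool) \<Rightarrow> 'a list \<Rightarrow> bool" where
  "walk V E p \<longleftrightarrow> p \<noteq> [] \<and> set p \<subseteq> V \<and> (\<forall>i. Suc i < length p \<longrightarrow> E (p ! i) (p ! Suc i))"

definition connected_graph :: "'a set \<Rightarrow> ('a \<Rightarrow> 'a \<Rightarrow> bool) \<Rightarrow> bool" where
  "connected_graph V E \<longleftrightarrow> (\<forall>u\<in>V. \<forall>v\<in>V. \<exists>p. walk V E p \<and> hd p = u \<and> last p = v)"

definition gdist :: "'a set \<Rightarrow> ('a \<Rightarrow> 'a \<Rightarrow> bool) \<Rightarrow> 'a \<Rightarrow> 'a \<Rightarrow> nat" where
  "gdist V E u v = (LEAST n. \<exists>p. walk V E p \<and> hd p = u \<and> last p = v \<and> length p = Suc n)"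

definition shortest_path :: "'a set \<Rightarrow> ('a \<Rightarrow> 'a \<Rightarrow> bool) \<Rightarrow> 'a list \<Rightarrow> 'a \<Rightarrow> 'a \<Rightarrow> bool" where
  "shortest_path V E p u v \<longleftrightarrow> walk V E p \<and> hd p = u \<and> last p = v \<and> length p = Suc (gdist V E u v)"

text \<open>succ(u,w): vertices following u on some shortest u-w path (empty if u = w).\<close>
definition succ :: "'a set \<Rightarrow> ('a \<Rightarrow> 'a \<Rightarrow> bool) \<Rightarrow> 'a \<Rightarrow> 'a \<Rightarrow> 'a set" where
  "succ V E u w = {p ! 1 | p. shortest_path V E p u w \<and> 2 \<le> length p}"

definition dominating_mset :: "'a set \<Rightarrow> ('a \<Rightarrow> 'a \<Rightarrow> bool) \<Rightarrow> 'a multiset \<Rightarrow> bool" where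
  "dominating_mset V E D \<longleftrightarrow> set_mset D \<subseteq> V \<and> (\<forall>v\<in>V. v \<in># D \<or> (\<exists>u\<in>#D. E u v))"

definition slide :: "'a multiset \<Rightarrow> 'a \<Rightarrow> 'a \<Rightarrow> 'a multiset" where
  "slide D u w = add_mset w (D - {#u#})"

definition is_matching :: "'a multiset \<Rightarrow> 'a multiset \<Rightarrow> ('a \<times> 'a) multiset \<Rightarrow> bool" where
  "is_matching Ds Dt M \<longleftrightarrow> image_mset fst M = Ds \<and> image_mset snd M = Dt"

definition match_cost :: "'a set \<Rightarrow> ('a \<Rightarrow> 'a \<Rightarrow> bool) \<Rightarrow> ('a \<times> 'a) multiset \<Rightarrow> nat" where
  "match_cost V E M = (\<Sum>(x,y)\<in>#M. gdist V E x y)"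

definition min_cost_matching :: "'a set \<Rightarrow> ('a \<Rightarrow> 'a \<Rightarrow> bool) \<Rightarrow> 'a multiset \<Rightarrow> 'a multiset \<Rightarrow> ('a \<times> 'a) multiset \<Rightarrow> bool" where
  "min_cost_matching V E Ds Dt M \<longleftrightarrow> is_matching Ds Dt M \<and>
     (\<forall>M'. is_matching Ds Dt M' \<longrightarrow> match_cost V E M \<le> match_cost V E M')"

end

theory Submission
  imports Defs
begin

lemma walk_single[simp]: "walk V E [a] \<longleftrightarrow> a \<in> V"
  unfolding walk_def by auto

lemma walk_Cons_Cons[simp]:
  "walk V E (a # b # p) \<longleftrightarrow> a \<in> V \<and> E a b \<and> walk V E (b # p)"
proof
  assume h: "walk V E (a # b # p)"
  have "\<forall>i. Suc i < length (b # p) \<longrightarrow> E ((b # p) ! i) ((b # p) ! Suc i)"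
  proof (intro allI impI)
    fix i assume "Suc i < length (b # p)"
    with h have "E ((a # b # p) ! Suc i) ((a # b # p) ! Suc (Suc i))" unfolding walk_def by auto
    then show "E ((b # p) ! i) ((b # p) ! Suc i)" by simp
  qed
  moreover have "\<forall>i. Suc i < length (a # b # p) \<longrightarrow> E ((a # b # p) ! i) ((a # b # p) ! Suc i)"
    using h unfolding walk_def by blast
  then have "E a b" by (drule_tac spec[of _ 0]) simp
  ultimately show "a \<in> V \<and> E a b \<and> walk V E (b # p)" using h unfolding walk_def by auto
next
  assume h: "a \<in> V \<and> E a b \<and> walk V E (b # p)"
  show "walk V E (a # b # p)" unfolding walk_def
  proof (intro conjI allI impI)
    show "a # b # p \<noteq> []" by simp
    show "set (a # b # p) \<subseteq> V" using h unfolding walk_def by auto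
    fix i assume i: "Suc i < length (a # b # p)"
    show "E ((a # b # p) ! i) ((a # b # p) ! Suc i)"
    proof (cases i)
      case 0 then show ?thesis using h by simp
    next
      case (Suc j) then show ?thesis using h i unfolding walk_def by auto
    qed
  qed
qed

lemma walk_append:
  "walk V E (xs @ [y]) \<Longrightarrow> walk V E (y # ys) \<Longrightarrow> walk V E (xs @ y # ys)"
proof (induction xs)
  case Nil then show ?case by simp
next
  case (Cons a xs)
  then show ?case by (cases xs) auto
qed

lemma walk_ConsD: "walk V E (a # p) \<Longrightarrow> p \<noteq> [] \<Longrightarrow> walk V E p"
  by (cases p) auto

lemma walk_take: "walk V E p \<Longrightarrow> 0 < n \<Longrightarrow> walk V E (take n p)"
proof (induction p arbitrary: n)
  case Nil then show ?case by (simp add: walk_def)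
next
  case (Cons a p)
  then obtain m where n: "n = Suc m" by (cases n) auto
  show ?case
  proof (cases "p = [] \<or> m = 0")
    case True then show ?thesis using Cons n by (auto simp: walk_def)
  next
    case False
    then obtain b q where p: "p = b # q" and m: "0 < m" by (cases p) auto
    have "walk V E (take m p)" using Cons p m by (intro Cons.IH) auto
    then show ?thesis using Cons.prems p n m by (cases m) auto
  qed
qed

lemma walk_drop: "walk V E p \<Longrightarrow> n < length p \<Longrightarrow> walk V E (drop n p)"
proof (induction n arbitrary: p)
  case 0 then show ?case by simp
next
  case (Suc n)
  then obtain a q where p: "p = a # q" by (cases p) auto
  with Suc have "walk V E q" using walk_ConsD by fastforce
  then show ?case using Suc p by auto
qed

lemma walk_rev: "walk V E p \<Longrightarrow> (\<forall>a b. E a b \<longrightarrow> E b a) \<Longrightarrow> walk V E (rev p)"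
  unfolding walk_def
proof (intro conjI allI impI)
  assume h: "p \<noteq> [] \<and> set p \<subseteq> V \<and> (\<forall>i. Suc i < length p \<longrightarrow> E (p ! i) (p ! Suc i))"
    and s: "\<forall>a b. E a b \<longrightarrow> E b a"
  show "rev p \<noteq> []" "set (rev p) \<subseteq> V" using h by auto
  fix i assume i: "Suc i < length (rev p)"
  let ?n = "length p"
  have "E (p ! (?n - Suc (Suc i))) (p ! Suc (?n - Suc (Suc i)))" using h i by auto
  moreover have "Suc (?n - Suc (Suc i)) = ?n - Suc i" using i by simp
  ultimately show "E (rev p ! i) (rev p ! Suc i)" using s i by (simp add: rev_nth)
qed


lemma walk_hd_last_nth:
  "p \<noteq> [] \<Longrightarrow> hd p = p ! 0 \<and> last p = p ! (length p - 1)"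
  by (simp add: hd_conv_nth last_conv_nth)

locale ig =
  fixes V :: "'a set" and E :: "'a \<Rightarrow> 'a \<Rightarrow> bool" and l r :: "'a \<Rightarrow> real"
  assumes sg: "simple_graph V E"
    and conn: "connected_graph V E"
    and lr: "\<forall>v\<in>V. l v \<le> r v"
    and rep: "\<forall>u\<in>V. \<forall>v\<in>V. u \<noteq> v \<longrightarrow> (E u v \<longleftrightarrow> max (l u) (l v) \<le> min (r u) (r v))"
begin

lemma E_V: "E a b \<Longrightarrow> a \<in> V \<and> b \<in> V" using sg unfolding simple_graph_def by blast
lemma E_sym: "E a b \<Longrightarrow> E b a" using sg unfolding simple_graph_def by blast
lemma E_irr: "\<not> E a a" using sg unfolding simple_graph_def by blast

lemma walk_ex: "a \<in> V \<Longrightarrow> b \<in> V \<Longrightarrow> \<exists>p. walk V E p \<and> hd p = a \<and> last p = b"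
  using conn unfolding connected_graph_def by blast

lemma gdist_le: "walk V E p \<Longrightarrow> hd p = a \<Longrightarrow> last p = b \<Longrightarrow> gdist V E a b \<le> length p - 1"
proof -
  assume h: "walk V E p" "hd p = a" "last p = b"
  then have "p \<noteq> []" unfolding walk_def by blast
  then have "length p = Suc (length p - 1)" by simp
  then show ?thesis unfolding gdist_def using h by (intro Least_le) blast
qed

lemma sp_ex: assumes "a \<in> V" "b \<in> V" shows "\<exists>p. shortest_path V E p a b"
proof -
  obtain p where p: "walk V E p" "hd p = a" "last p = b" using walk_ex assms by blast
  have "\<exists>n. \<exists>p. walk V E p \<and> hd p = a \<and> last p = b \<and> length p = Suc n"
  proof -
    have "p \<noteq> []" using p unfolding walk_def by blast
    then have "length p = Suc (length p - 1)" by simp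
    then show ?thesis using p by blast
  qed
  from LeastI_ex[OF this] show ?thesis unfolding shortest_path_def gdist_def by blast
qed

lemma sp_props: "shortest_path V E p a b \<Longrightarrow> walk V E p \<and> hd p = a \<and> last p = b \<and> length p = Suc (gdist V E a b)"
  unfolding shortest_path_def by blast

lemma gdist_refl: "a \<in> V \<Longrightarrow> gdist V E a a = 0"
  using gdist_le[of "[a]" a a] by simp

lemma gdist_pos: assumes "a \<in> V" "b \<in> V" "a \<noteq> b" shows "1 \<le> gdist V E a b"
proof (rule ccontr)
  assume "\<not> 1 \<le> gdist V E a b"
  then have "gdist V E a b = 0" by simp
  obtain p where "shortest_path V E p a b" using sp_ex assms by blast
  then have "walk V E p" "hd p = a" "last p = b" "length p = 1" using sp_props \<open>gdist V E a b = 0\<close> by auto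
  then show False using assms(3) by (cases p) auto
qed

lemma gdist_edge: "E a b \<Longrightarrow> gdist V E a b \<le> 1"
  using gdist_le[of "[a,b]" a b] E_V by simp

lemma gdist_one_edge: assumes "a \<in> V" "b \<in> V" "gdist V E a b = 1" shows "E a b"
proof -
  obtain p where "shortest_path V E p a b" using sp_ex assms by blast
  then have w: "walk V E p" "hd p = a" "last p = b" "length p = 2" using sp_props assms(3) by auto
  then obtain x y where "p = [x, y]" by (cases p; cases "tl p") auto
  then show ?thesis using w by auto
qed

lemma gdist_sym: assumes "a \<in> V" "b \<in> V" shows "gdist V E a b = gdist V E b a"
proof -
  have le: "gdist V E x y \<le> gdist V E y x" if xy: "x \<in> V" "y \<in> V" for x y
  proof -
    obtain p where "shortest_path V E p y x" using sp_ex xy by blast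
    then have w: "walk V E p" "hd p = y" "last p = x" "length p = Suc (gdist V E y x)" using sp_props by auto
    then have "walk V E (rev p)" using walk_rev E_sym by blast
    moreover have "hd (rev p) = x" "last (rev p) = y" using w
      by (auto simp: hd_rev last_rev)
    ultimately show ?thesis using gdist_le[of "rev p" x y] w by simp
  qed
  show ?thesis using le assms by (simp add: le_antisym)
qed

lemma gdist_tri: assumes "a \<in> V" "b \<in> V" "c \<in> V"
  shows "gdist V E a c \<le> gdist V E a b + gdist V E b c"
proof -
  obtain p where "shortest_path V E p a b" using sp_ex assms by blast
  then have p: "walk V E p" "hd p = a" "last p = b" "length p = Suc (gdist V E a b)" using sp_props by auto
  obtain q where "shortest_path V E q b c" using sp_ex assms by blast
  then have q: "walk V E q" "hd q = b" "last q = c" "length q = Suc (gdist V E b c)" using sp_props by auto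
  have p': "butlast p @ [b] = p" using p by (metis append_butlast_last_id list.size(3) nat.simps(3))
  have q': "b # tl q = q" using q by (metis list.collapse list.size(3) nat.simps(3))
  have w: "walk V E (butlast p @ b # tl q)" using walk_append[of V E "butlast p" b "tl q"] p q p' q' by simp
  have "hd (butlast p @ b # tl q) = a"
    using p p' by (metis hd_append2 list.sel(1) self_append_conv2)
  moreover have "last (butlast p @ b # tl q) = c" using q q' by (metis last_appendR list.distinct(1))
  ultimately have "gdist V E a c \<le> length (butlast p @ b # tl q) - 1" using gdist_le w by blast
  also have "\<dots> = gdist V E a b + gdist V E b c" using p q by simp
  finally show ?thesis .
qed

definition meet :: "'a \<Rightarrow> 'a \<Rightarrow> bool" where
  "meet a b \<longleftrightarrow> l a \<le> r b \<and> l b \<le> r a"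

lemma meet_iff: "a \<in> V \<Longrightarrow> b \<in> V \<Longrightarrow> (a = b \<or> E a b) \<longleftrightarrow> meet a b"
  using rep lr unfolding meet_def by (cases "a = b") auto

lemma meet_dist: "a \<in> V \<Longrightarrow> b \<in> V \<Longrightarrow> meet a b \<Longrightarrow> gdist V E a b \<le> 1"
  using meet_iff gdist_edge gdist_refl by fastforce

lemma walk_meet: "walk V E p \<Longrightarrow> Suc i < length p \<Longrightarrow> meet (p ! i) (p ! Suc i)"
  unfolding walk_def using meet_iff by (metis Suc_lessD nth_mem subsetD)

lemma cover:
  assumes w: "walk V E p" and i: "i < length p" and j: "j < length p"
    and ci: "l (p ! i) \<le> c" and cj: "c \<le> r (p ! j)"
  shows "\<exists>k<length p. l (p ! k) \<le> c \<and> c \<le> r (p ! k)"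
proof (rule ccontr)
  assume "\<not> ?thesis"
  then have out: "\<And>k. k < length p \<Longrightarrow> c < l (p ! k) \<or> r (p ! k) < c" by force
  have all: "k < length p \<Longrightarrow> (r (p ! k) < c) = (r (p ! 0) < c)" for k
  proof (induction k)
    case 0 then show ?case by simp
  next
    case (Suc k)
    have m: "meet (p ! k) (p ! Suc k)" using walk_meet w Suc.prems by blast
    have lr1: "l (p ! k) \<le> r (p ! k)" "l (p ! Suc k) \<le> r (p ! Suc k)"
      using lr w Suc.prems unfolding walk_def by (meson Suc_lessD nth_mem subsetD)+
    have "(r (p ! Suc k) < c) = (r (p ! k) < c)"
      using out[of k] out[of "Suc k"] Suc.prems m lr1 unfolding meet_def by auto
    then show ?case using Suc by simp
  qed
  have "r (p ! i) < c" using out[OF i] ci by auto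
  moreover have "\<not> r (p ! j) < c" using cj by auto
  ultimately show False using all[OF i] all[OF j] by simp
qed

lemma gdist_take: "walk V E p \<Longrightarrow> m < length p \<Longrightarrow> gdist V E (hd p) (p ! m) \<le> m"
proof -
  assume w: "walk V E p" and m: "m < length p"
  have ne: "p \<noteq> []" using w unfolding walk_def by blast
  have t: "take (Suc m) p \<noteq> []" using ne by simp
  have len: "length (take (Suc m) p) = Suc m" using m by simp
  have "last (take (Suc m) p) = take (Suc m) p ! m" using t len by (simp add: last_conv_nth)
  also have "\<dots> = p ! m" by simp
  finally have l: "last (take (Suc m) p) = p ! m" .
  have h: "hd (take (Suc m) p) = hd p" using ne by (simp add: hd_take)
  have "walk V E (take (Suc m) p)" using walk_take[OF w] by simp
  then show ?thesis using gdist_le[of "take (Suc m) p" "hd p" "p ! m"] l h len by simp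
qed

lemma gdist_drop: "walk V E p \<Longrightarrow> m < length p \<Longrightarrow> gdist V E (p ! m) (last p) \<le> length p - 1 - m"
  using gdist_le[of "drop m p" "p ! m" "last p"] walk_drop[of V E p m]
  by (simp add: hd_drop_conv_nth)

lemma walk_set: "walk V E p \<Longrightarrow> k < length p \<Longrightarrow> p ! k \<in> V"
  unfolding walk_def by auto

lemma jlemma:
  assumes V: "a \<in> V" "b \<in> V" "v \<in> V" and ab: "a \<noteq> b" and h1: "r b \<le> r v" and h2: "r v < l a"
  shows "gdist V E a v \<le> gdist V E a b"
proof -
  obtain p where "shortest_path V E p a b" using sp_ex V by blast
  then have p: "walk V E p" "hd p = a" "last p = b" "length p = Suc (gdist V E a b)" using sp_props by auto
  define k where "k = gdist V E a b"
  have k1: "1 \<le> k" using gdist_pos V ab k_def by auto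
  have p0: "p ! 0 = a" using p by (simp add: hd_conv_nth walk_def)
  have pk: "p ! k = b" using p k_def by (simp add: last_conv_nth walk_def)
  have q: "walk V E (take k p)" using walk_take[OF p(1), of k] k1 by simp
  have "meet (p ! (k - 1)) (p ! Suc (k - 1))" using walk_meet[OF p(1), of "k - 1"] p(4) k1 k_def by simp
  then have A: "l (take k p ! (k - 1)) \<le> r v" using pk k1 h1 unfolding meet_def by simp
  have B: "r v \<le> r (take k p ! 0)" using p0 k1 h2 lr V by force
  obtain m where m: "m < length (take k p)" "l (take k p ! m) \<le> r v" "r v \<le> r (take k p ! m)"
    using cover[OF q _ _ A B] k1 p k_def by auto
  have mk: "m < k" using m by simp
  have pmV: "p ! m \<in> V" using walk_set p mk k_def by simp
  have "meet (p ! m) v" using m mk lr V unfolding meet_def by force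
  then have d1: "gdist V E (p ! m) v \<le> 1" using meet_dist pmV V by blast
  have d2: "gdist V E a (p ! m) \<le> m" using gdist_take[OF p(1)] p mk k_def by auto
  have "gdist V E a v \<le> gdist V E a (p ! m) + gdist V E (p ! m) v" using gdist_tri V pmV by blast
  then show ?thesis using d1 d2 mk k_def by linarith
qed

lemma monolemma:
  assumes V: "a \<in> V" "s \<in> V" "v \<in> V" and av: "a \<noteq> v" and h1: "r a \<le> r s" and h2: "r s < l v"
  shows "gdist V E s v \<le> gdist V E a v"
proof -
  obtain p where "shortest_path V E p a v" using sp_ex V by blast
  then have p: "walk V E p" "hd p = a" "last p = v" "length p = Suc (gdist V E a v)" using sp_props by auto
  define k where "k = gdist V E a v"
  have k1: "1 \<le> k" using gdist_pos V av k_def by auto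
  have p0: "p ! 0 = a" using p by (simp add: hd_conv_nth walk_def)
  have pk: "p ! k = v" using p k_def by (simp add: last_conv_nth walk_def)
  have q: "walk V E (drop 1 p)" using walk_drop[OF p(1), of 1] p(4) k1 k_def by simp
  have "meet (p ! 0) (p ! Suc 0)" using walk_meet[OF p(1), of 0] p(4) k1 k_def by simp
  then have A: "l (drop 1 p ! 0) \<le> r s" using p0 h1 k1 k_def p unfolding meet_def by simp
  have B: "r s \<le> r (drop 1 p ! (k - 1))" using pk k1 h2 lr V p k_def by force
  obtain m where m: "m < length (drop 1 p)" "l (drop 1 p ! m) \<le> r s" "r s \<le> r (drop 1 p ! m)"
    using cover[OF q _ _ A B] k1 p k_def by auto
  have mk: "m < k" using m p k_def by simp
  have pmV: "p ! Suc m \<in> V" using walk_set p mk k_def by simp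
  have "meet s (p ! Suc m)" using m mk lr V unfolding meet_def by force
  then have d1: "gdist V E s (p ! Suc m) \<le> 1" using meet_dist pmV V by blast
  have d2: "gdist V E (p ! Suc m) v \<le> k - Suc m" using gdist_drop[OF p(1), of "Suc m"] p mk k_def by auto
  have "gdist V E s v \<le> gdist V E s (p ! Suc m) + gdist V E (p ! Suc m) v" using gdist_tri V pmV by blast
  then show ?thesis using d1 d2 mk k_def by linarith
qed

lemma succ_lemma:
  assumes V: "a \<in> V" "v \<in> V" and h: "r a < l v"
  shows "\<exists>a'. a' \<in> succ V E a v \<and> E a a' \<and> r a \<le> r a'"
proof -
  have av: "a \<noteq> v" using h lr V by force
  obtain p where sp: "shortest_path V E p a v" using sp_ex V by blast
  then have p: "walk V E p" "hd p = a" "last p = v" "length p = Suc (gdist V E a v)" using sp_props by auto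
  define k where "k = gdist V E a v"
  have k1: "1 \<le> k" using gdist_pos V av k_def by auto
  have p0: "p ! 0 = a" using p by (simp add: hd_conv_nth walk_def)
  have "p ! 1 \<in> succ V E a v" unfolding succ_def using sp p k1 k_def by auto
  moreover have "E a (p ! 1)"
  proof -
    have "\<forall>i. Suc i < length p \<longrightarrow> E (p ! i) (p ! Suc i)" using p(1) unfolding walk_def by blast
    then have "E (p ! 0) (p ! Suc 0)" using p(4) k1 k_def by (drule_tac spec[of _ 0]) simp
    then show ?thesis using p0 by simp
  qed
  moreover have "r a \<le> r (p ! 1)"
  proof (rule ccontr)
    assume c: "\<not> r a \<le> r (p ! 1)"
    have V1: "p ! 1 \<in> V" using walk_set p k1 k_def by simp
    show False
    proof (cases "p ! 1 = v")
      case True then show False using c h lr V by force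
    next
      case False
      have "gdist V E a v \<le> gdist V E (p ! 1) v" using monolemma[OF V1 V(1) V(2) False] c h by simp
      moreover have "gdist V E (p ! 1) v \<le> k - 1" using gdist_drop[OF p(1), of 1] p k1 k_def by auto
      ultimately show False using k1 k_def by linarith
    qed
  qed
  ultimately show ?thesis by blast
qed

lemma in_remove_neq: "z \<in># A \<Longrightarrow> z \<noteq> u \<Longrightarrow> z \<in># A - {#u#}"
  by (simp add: in_diff_count)

lemma dom_meet: "dominating_mset V E D \<Longrightarrow> w \<in> V \<Longrightarrow> \<exists>z\<in>#D. meet z w"
  unfolding dominating_mset_def using meet_iff by (metis subsetD set_mset_def)

lemma priv:
  assumes dA: "dominating_mset V E A" and u'V: "u' \<in> V" and nd: "\<not> dominating_mset V E (slide A u u')"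
  shows "\<exists>w\<in>V. \<not> meet u' w \<and> (\<forall>z\<in># A - {#u#}. \<not> meet z w) \<and> meet u w"
proof -
  have AV: "set_mset A \<subseteq> V" using dA unfolding dominating_mset_def by blast
  have sV: "set_mset (slide A u u') \<subseteq> V" unfolding slide_def using AV u'V
    by (auto dest: in_diffD)
  then obtain w where w: "w \<in> V" "\<not> (w \<in># slide A u u' \<or> (\<exists>z\<in>#slide A u u'. E z w))"
    using nd unfolding dominating_mset_def by blast
  have n1: "\<not> meet u' w" using w meet_iff u'V unfolding slide_def by auto
  have n2: "\<forall>z\<in># A - {#u#}. \<not> meet z w"
  proof
    fix z assume z: "z \<in># A - {#u#}"
    then have "z \<in> V" using AV by (auto dest: in_diffD)
    then show "\<not> meet z w" using w z meet_iff unfolding slide_def by auto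
  qed
  from dom_meet[OF dA w(1)] obtain z where z: "z \<in># A" "meet z w" ..
  have "z = u"
  proof (rule ccontr)
    assume "z \<noteq> u"
    then have "z \<in># A - {#u#}" by (rule in_remove_neq[OF z(1)])
    then show False using n2 z(2) by blast
  qed
  then have "meet u w" using z(2) by simp
  then show ?thesis using w(1) n1 n2 by blast
qed

lemma succ_sp: "shortest_path V E p a b \<Longrightarrow> 2 \<le> length p \<Longrightarrow> p ! 1 \<in> succ V E a b"
  unfolding succ_def by blast

lemma succ_nonempty: assumes "a \<in> V" "b \<in> V" "a \<noteq> b" shows "\<exists>a'. a' \<in> succ V E a b"
proof -
  obtain p where sp: "shortest_path V E p a b" using sp_ex assms by blast
  then have "2 \<le> length p" using sp_props gdist_pos assms by fastforce
  then show ?thesis using succ_sp sp by blast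
qed

lemma succ_V: "a' \<in> succ V E a b \<Longrightarrow> a' \<in> V"
  unfolding succ_def shortest_path_def walk_def by auto

lemma succ_edge: assumes "E a b" shows "b \<in> succ V E a b"
proof -
  have V: "a \<in> V" "b \<in> V" using E_V assms by auto
  have "a \<noteq> b" using E_irr assms by auto
  then have "gdist V E a b = 1" using gdist_edge gdist_pos V assms by (simp add: le_antisym)
  then have "shortest_path V E [a,b] a b" unfolding shortest_path_def using V assms by simp
  then show ?thesis using succ_sp by fastforce
qed

definition Gd :: "'a \<Rightarrow> 'a \<Rightarrow> real" where
  "Gd a b = (l a - l b)^2 + (r a - r b)^2"

lemma Gd_sym: "Gd a b = Gd b a"
  unfolding Gd_def by (simp add: power2_commute)

lemma core:
  assumes M: "is_matching A B M" and uvM: "(u,v) \<in># M" and uv: "u \<noteq> v"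
    and domA: "dominating_mset V E A" and domB: "dominating_mset V E B"
    and ruv: "r u \<le> r v"
    and minm: "\<forall>(a,b)\<in>#M. a \<noteq> b \<longrightarrow> r u \<le> r a \<and> r u \<le> r b"
    and failu: "\<forall>u'\<in>succ V E u v. \<not> dominating_mset V E (slide A u u')"
    and failv: "\<forall>v'\<in>succ V E v u. \<not> dominating_mset V E (slide B v v')"
  shows "\<exists>(s,t)\<in># M - {#(u,v)#}. gdist V E u t + gdist V E s v \<le> gdist V E u v + gdist V E s t
           \<and> Gd u t + Gd s v < Gd u v + Gd s t"
proof -
  have AV: "set_mset A \<subseteq> V" using domA unfolding dominating_mset_def by blast
  have BV: "set_mset B \<subseteq> V" using domB unfolding dominating_mset_def by blast
  have fstM: "image_mset fst M = A" and sndM: "image_mset snd M = B" using M unfolding is_matching_def by auto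
  have uA: "u \<in># A" using uvM fstM by (metis fst_conv image_eqI set_image_mset)
  have vB: "v \<in># B" using uvM sndM by (metis snd_conv image_eqI set_image_mset)
  have uV: "u \<in> V" and vV: "v \<in> V" using uA vB AV BV by auto
  have W: "\<exists>w\<in>V. meet u w \<and> (\<forall>z\<in># A - {#u#}. \<not> meet z w) \<and> r w < l v \<and> r w \<le> r u"
  proof (cases "E u v")
    case True
    have "v \<in> succ V E u v" using succ_edge True .
    then obtain w where w: "w \<in> V" "\<not> meet v w" "\<forall>z\<in># A - {#u#}. \<not> meet z w" "meet u w"
      using priv[OF domA vV] failu by blast
    have "meet u v" using True meet_iff uV vV by blast
    then show ?thesis using w ruv unfolding meet_def by (intro bexI[of _ w]) auto
  next
    case False
    then have "\<not> meet u v" using meet_iff uV vV uv by blast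
    then have ruv': "r u < l v" using ruv lr uV unfolding meet_def by force
    obtain u' where u': "u' \<in> succ V E u v" "E u u'" "r u \<le> r u'" using succ_lemma uV vV ruv' by blast
    have u'V: "u' \<in> V" using succ_V u' by blast
    obtain w where w: "w \<in> V" "\<not> meet u' w" "\<forall>z\<in># A - {#u#}. \<not> meet z w" "meet u w"
      using priv[OF domA u'V] failu u' by blast
    have "meet u u'" using u' meet_iff uV u'V by blast
    then show ?thesis using w u' ruv' unfolding meet_def by (intro bexI[of _ w]) auto
  qed
  then obtain w where w: "w \<in> V" "meet u w" "\<forall>z\<in># A - {#u#}. \<not> meet z w" "r w < l v" "r w \<le> r u"
    by blast
  obtain v' where v': "v' \<in> succ V E v u" using succ_nonempty uV vV uv by metis
  have v'V: "v' \<in> V" using succ_V v' by blast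
  obtain x where x: "x \<in> V" "\<forall>z\<in># B - {#v#}. \<not> meet z x" "meet v x"
    using priv[OF domB v'V] failv v' by blast
  obtain t where t: "t \<in># B" "meet t w" using dom_meet domB w by blast
  have tv: "t \<noteq> v" using t w unfolding meet_def by auto
  obtain s where stM: "(s,t) \<in># M" using t sndM by (metis image_iff prod.collapse set_image_mset)
  have stM': "(s,t) \<in># M - {#(u,v)#}" by (rule in_remove_neq[OF stM]) (use tv in simp)
  have "image_mset fst (M - {#(u,v)#}) = A - {#u#}"
    using image_mset_Diff[of "{#(u,v)#}" M fst] uvM fstM by simp
  then have sA: "s \<in># A - {#u#}" using stM' by (metis fst_conv image_eqI set_image_mset)
  have "image_mset snd (M - {#(u,v)#}) = B - {#v#}"
    using image_mset_Diff[of "{#(u,v)#}" M snd] uvM sndM by simp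
  then have tB: "t \<in># B - {#v#}" using stM' by (metis snd_conv image_eqI set_image_mset)
  have sV: "s \<in> V" and tV: "t \<in> V" using sA tB AV BV by (auto dest: in_diffD)
  have nsw: "\<not> meet s w" using w sA by blast
  have ntx: "\<not> meet t x" using x tB by blast
  have st: "s \<noteq> t" using nsw t by auto
  have rs: "r u \<le> r s" and rt: "r u \<le> r t" using minm stM st by auto
  have lrall: "l u \<le> r u" "l v \<le> r v" "l s \<le> r s" "l t \<le> r t" "l w \<le> r w" "l x \<le> r x"
    using lr uV vV sV tV w x by auto
  have f1: "r t < l x" "l x \<le> r v" "l t \<le> r w"
    using ntx x t w lrall unfolding meet_def by auto
  have f2: "r w < l s" using nsw w rs lrall unfolding meet_def by auto
  have f3: "l u \<le> r w" using w unfolding meet_def by auto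
  have mut: "meet u t" using t w rt lrall unfolding meet_def by auto
  have dut: "gdist V E u t \<le> 1" using meet_dist uV tV mut by blast
  have duv: "1 \<le> gdist V E u v" using gdist_pos uV vV uv by blast
  have dst: "1 \<le> gdist V E s t" using gdist_pos sV tV st by blast
  have dsv: "gdist V E s v \<le> gdist V E s t \<or> gdist V E s v \<le> gdist V E u v"
  proof (cases "meet s v")
    case True then show ?thesis using meet_dist sV vV dst by fastforce
  next
    case False
    then consider "r v < l s" | "r s < l v" unfolding meet_def by linarith
    then show ?thesis
    proof cases
      case 1
      then show ?thesis using jlemma[OF sV tV vV st] f1 by simp
    next
      case 2
      then show ?thesis using monolemma[OF uV sV vV uv rs] by simp
    qed
  qed
  have cost: "gdist V E u t + gdist V E s v \<le> gdist V E u v + gdist V E s t"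
    using dut duv dst dsv by linarith
  have p1: "(l u - l s) * (l v - l t) < 0" using f2 f3 f1 w
    by (intro mult_neg_pos) linarith+
  have p2: "(r u - r s) * (r v - r t) \<le> 0" using rs f1
    by (intro mult_nonpos_nonneg) linarith+
  have eq: "Gd u t + Gd s v - (Gd u v + Gd s t) = 2 * ((l u - l s) * (l v - l t) + (r u - r s) * (r v - r t))"
    unfolding Gd_def by (simp add: power2_eq_square algebra_simps)
  have "(l u - l s) * (l v - l t) + (r u - r s) * (r v - r t) < 0" by (rule add_neg_nonpos[OF p1 p2])
  then have "Gd u t + Gd s v - (Gd u v + Gd s t) < 0" unfolding eq by simp
  then have "Gd u t + Gd s v < Gd u v + Gd s t" by simp
  then show ?thesis using stM' cost by blast
qed

end


lemma match_cost_add: "match_cost V E (add_mset (a,b) M) = gdist V E a b + match_cost V E M"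
  unfolding match_cost_def by simp

theorem mainTheorem8:
  fixes V :: "'a set" and E :: "'a \<Rightarrow> 'a \<Rightarrow> bool" and Ds Dt :: "'a multiset"
  assumes "interval_graph V E"
    and "connected_graph V E"
    and "dominating_mset V E Ds" and "dominating_mset V E Dt"
    and "Ds \<noteq> Dt"
    and "size Ds = size Dt"
  shows "\<exists>M. min_cost_matching V E Ds Dt M \<and>
           ((\<exists>(u,v)\<in>#M. \<exists>u'\<in>succ V E u v. dominating_mset V E (slide Ds u u')) \<or>
            (\<exists>(u,v)\<in>#M. \<exists>v'\<in>succ V E v u. dominating_mset V E (slide Dt v v')))"
proof -
  note ig = assms(1)[unfolded interval_graph_def]
  obtain l r :: "'a \<Rightarrow> real" where lr: "\<forall>v\<in>V. l v \<le> r v"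
    and rep: "\<forall>u\<in>V. \<forall>v\<in>V. u \<noteq> v \<longrightarrow> (E u v \<longleftrightarrow> max (l u) (l v) \<le> min (r u) (r v))"
    using ig by blast
  interpret ig V E l r using ig lr rep assms(2) by unfold_locales auto
  have DsV: "set_mset Ds \<subseteq> V" and DtV: "set_mset Dt \<subseteq> V"
    using assms(3,4) unfolding dominating_mset_def by auto
  define S where "S = {M. is_matching Ds Dt M}"
  obtain xs ys where xs: "mset xs = Ds" and ys: "mset ys = Dt" using ex_mset by metis
  have len: "length xs = length ys" using xs ys assms(6) by (metis size_mset)
  have M0: "mset (zip xs ys) \<in> S" unfolding S_def is_matching_def
    using xs ys len by (simp flip: mset_map)
  have Ssub: "S \<subseteq> multisets_of_size (set_mset Ds \<times> set_mset Dt) (size Ds)"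
  proof
    fix M assume "M \<in> S"
    then have m: "image_mset fst M = Ds" "image_mset snd M = Dt" unfolding S_def is_matching_def by auto
    have "set_mset M \<subseteq> set_mset Ds \<times> set_mset Dt"
    proof
      fix p assume "p \<in># M"
      then show "p \<in> set_mset Ds \<times> set_mset Dt" using m
        by (metis mem_Sigma_iff image_eqI set_image_mset prod.collapse)
    qed
    moreover have "size M = size Ds" using m by (metis size_image_mset)
    ultimately show "M \<in> multisets_of_size (set_mset Ds \<times> set_mset Dt) (size Ds)"
      unfolding multisets_of_size_def by simp
  qed
  have finS: "finite S" using Ssub finite_multisets_of_size
    by (meson finite_SigmaI finite_set_mset rev_finite_subset)
  define c0 where "c0 = Min (match_cost V E ` S)"
  have c0le: "\<And>M. M \<in> S \<Longrightarrow> c0 \<le> match_cost V E M" unfolding c0_def using finS by simp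
  define S0 where "S0 = {M\<in>S. match_cost V E M = c0}"
  have "c0 \<in> match_cost V E ` S" unfolding c0_def using finS M0 by (intro Min_in) auto
  then have S0ne: "S0 \<noteq> {}" unfolding S0_def by auto
  have finS0: "finite S0" using finS unfolding S0_def by simp
  define Gs where "Gs = (\<lambda>M. \<Sum>(a,b)\<in>#M. Gd a b)"
  define g0 where "g0 = Min (Gs ` S0)"
  have "g0 \<in> Gs ` S0" unfolding g0_def using finS0 S0ne by (intro Min_in) auto
  then obtain M where MS0: "M \<in> S0" and Mg: "Gs M = g0" by blast
  have gle: "\<And>M'. M' \<in> S0 \<Longrightarrow> Gs M \<le> Gs M'" unfolding Mg g0_def using finS0 by simp
  have Mmatch: "is_matching Ds Dt M" and Mc: "match_cost V E M = c0" using MS0 unfolding S0_def S_def by auto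
  have Mmin: "min_cost_matching V E Ds Dt M"
    unfolding min_cost_matching_def using Mmatch Mc c0le unfolding S_def by auto
  have fstM: "image_mset fst M = Ds" and sndM: "image_mset snd M = Dt"
    using Mmatch unfolding is_matching_def by auto
  have MV: "\<And>a b. (a,b) \<in># M \<Longrightarrow> a \<in> V \<and> b \<in> V"
    using fstM sndM DsV DtV by (metis fst_conv snd_conv image_eqI set_image_mset subsetD)
  show ?thesis
  proof (rule exI[of _ M], rule conjI[OF Mmin], rule ccontr)
    assume neg: "\<not> ((\<exists>(u,v)\<in>#M. \<exists>u'\<in>succ V E u v. dominating_mset V E (slide Ds u u')) \<or>
            (\<exists>(u,v)\<in>#M. \<exists>v'\<in>succ V E v u. dominating_mset V E (slide Dt v v')))"
    then have failA: "\<forall>(u,v)\<in>#M. \<forall>u'\<in>succ V E u v. \<not> dominating_mset V E (slide Ds u u')"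
      and failB: "\<forall>(u,v)\<in>#M. \<forall>v'\<in>succ V E v u. \<not> dominating_mset V E (slide Dt v v')" by auto
    define P where "P = {p \<in> set_mset M. fst p \<noteq> snd p}"
    have Pne: "P \<noteq> {}"
    proof
      assume "P = {}"
      then have "\<forall>p\<in>#M. fst p = snd p" unfolding P_def by auto
      then have "image_mset fst M = image_mset snd M" by (intro image_mset_cong) auto
      then show False using fstM sndM assms(5) by simp
    qed
    have finP: "finite P" unfolding P_def by simp
    define mu where "mu = (\<lambda>p. min (r (fst p)) (r (snd p)))"
    have "Min (mu ` P) \<in> mu ` P" using finP Pne by (intro Min_in) auto
    then obtain u v where uvP: "(u,v) \<in> P" and uvmin: "mu (u,v) = Min (mu ` P)" by auto
    have uvM: "(u,v) \<in># M" and uv: "u \<noteq> v" using uvP unfolding P_def by auto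
    have uV: "u \<in> V" and vV: "v \<in> V" using MV uvM by auto
    have minm: "\<forall>(a,b)\<in>#M. a \<noteq> b \<longrightarrow> mu (u,v) \<le> r a \<and> mu (u,v) \<le> r b"
    proof (intro ballI, clarify)
      fix a b assume ab: "(a,b) \<in># M" "a \<noteq> b"
      then have "(a,b) \<in> P" unfolding P_def by auto
      then have "mu (u,v) \<le> mu (a,b)" unfolding uvmin using finP by simp
      then show "mu (u,v) \<le> r a \<and> mu (u,v) \<le> r b" unfolding mu_def by simp
    qed
    have "\<exists>(s,t)\<in># M - {#(u,v)#}. gdist V E u t + gdist V E s v \<le> gdist V E u v + gdist V E s t
           \<and> Gd u t + Gd s v < Gd u v + Gd s t"
    proof (cases "r u \<le> r v")
      case True
      have "mu (u,v) = r u" using True unfolding mu_def by simp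
      then have minm': "\<forall>(a,b)\<in>#M. a \<noteq> b \<longrightarrow> r u \<le> r a \<and> r u \<le> r b" using minm by simp
      have fu: "\<forall>u'\<in>succ V E u v. \<not> dominating_mset V E (slide Ds u u')" using bspec[OF failA uvM] by simp
      have fv: "\<forall>v'\<in>succ V E v u. \<not> dominating_mset V E (slide Dt v v')" using bspec[OF failB uvM] by simp
      show ?thesis by (rule core[OF Mmatch uvM uv assms(3,4) True minm' fu fv])
    next
      case False
      define MT where "MT = image_mset prod.swap M"
      have MTm: "is_matching Dt Ds MT" unfolding MT_def is_matching_def using fstM sndM
        by (simp add: multiset.map_comp comp_def)
      have vuMT: "(v,u) \<in># MT" unfolding MT_def using uvM by force
      have "mu (u,v) = r v" using False unfolding mu_def by simp
      then have minT: "\<forall>(a,b)\<in>#MT. a \<noteq> b \<longrightarrow> r v \<le> r a \<and> r v \<le> r b"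
        using minm unfolding MT_def by auto
      have fu: "\<forall>u'\<in>succ V E v u. \<not> dominating_mset V E (slide Dt v u')" using bspec[OF failB uvM] by simp
      have fv: "\<forall>v'\<in>succ V E u v. \<not> dominating_mset V E (slide Ds u v')" using bspec[OF failA uvM] by simp
      obtain t s where ts: "(t,s) \<in># MT - {#(v,u)#}"
        and i1: "gdist V E v s + gdist V E t u \<le> gdist V E v u + gdist V E t s"
        and i2: "Gd v s + Gd t u < Gd v u + Gd t s"
        using core[OF MTm vuMT uv[symmetric] assms(4,3)] False minT fu fv by fastforce
      have "MT - {#(v,u)#} = image_mset prod.swap (M - {#(u,v)#})"
        unfolding MT_def using image_mset_Diff[of "{#(u,v)#}" M prod.swap] uvM by simp
      then have stM: "(s,t) \<in># M - {#(u,v)#}" using ts by auto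
      then have "(s,t) \<in># M" by (auto dest: in_diffD)
      then have sV: "s \<in> V" and tV: "t \<in> V" using MV by auto
      have "gdist V E u t + gdist V E s v \<le> gdist V E u v + gdist V E s t"
        using i1 gdist_sym sV tV uV vV by simp
      moreover have "Gd u t + Gd s v < Gd u v + Gd s t"
        using i2 Gd_sym by (simp add: add.commute)
      ultimately show ?thesis using stM by blast
    qed
    then obtain s t where stM: "(s,t) \<in># M - {#(u,v)#}"
      and i1: "gdist V E u t + gdist V E s v \<le> gdist V E u v + gdist V E s t"
      and i2: "Gd u t + Gd s v < Gd u v + Gd s t" by blast
    define R where "R = M - {#(u,v)#} - {#(s,t)#}"
    have e1: "add_mset (s,t) R = M - {#(u,v)#}" unfolding R_def by (rule insert_DiffM[OF stM])
    have Mdec: "M = add_mset (u,v) (add_mset (s,t) R)"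
      unfolding e1 by (rule insert_DiffM[OF uvM, symmetric])
    define M' where "M' = add_mset (u,t) (add_mset (s,v) R)"
    have M'm: "is_matching Ds Dt M'"
      using fstM sndM unfolding is_matching_def M'_def by (subst (asm) (1 2) Mdec) (simp add: add_mset_commute)
    have cM: "match_cost V E M = gdist V E u v + gdist V E s t + match_cost V E R"
      by (subst Mdec) (simp add: match_cost_add)
    have cM': "match_cost V E M' = gdist V E u t + gdist V E s v + match_cost V E R"
      unfolding M'_def by (simp add: match_cost_add)
    have "M' \<in> S" using M'm unfolding S_def by simp
    then have "c0 \<le> match_cost V E M'" using c0le by blast
    then have "M' \<in> S0" using cM cM' i1 Mc \<open>M' \<in> S\<close> unfolding S0_def by simp
    then have "Gs M \<le> Gs M'" using gle by blast
    moreover have "Gs M = Gd u v + Gd s t + Gs R" unfolding Gs_def by (subst Mdec) simp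
    moreover have "Gs M' = Gd u t + Gd s v + Gs R" unfolding Gs_def M'_def by simp
    ultimately show False using i2 by linarith
  qed
qed

end
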